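(* If $M$ is a finite monoid, then the poset $\mathscr{II}(M)$ of two-sided idempotent ideals of $M$, ordered by inclusion, is a distributive lattice, with join $I\vee J=I\cup J$ and meet $I\wedge J=\bigcup_e MeM$ ($e$ ranging over idempotents in $I\cap J$); i.e. $I\wedge(J\cup K)=(I\wedge J)\cup(I\wedge K)$ for all $I,J,K\in\mathscr{II}(M)$.
   Context: A two-sided ideal $I$ (possibly empty) is idempotent if $I=I^2=\{xy\mid x,y\in I\}$. *)

theory Defs
  imports Main
begin

text \<open>Two-sided ideals of a monoid (the type 'a), possibly empty.\<close>
definition two_sided_ideal :: "'a::monoid_mult set \<Rightarrow> bool" where
  "two_sided_ideal I \<longleftrightarrow> (\<forall>x\<in>I. \<forall>m. m * x \<in> I \<and> x * m \<in> I)"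

definition set_square :: "'a::monoid_mult set \<Rightarrow> 'a set" where
  "set_square I = {x * y | x y. x \<in> I \<and> y \<in> I}"

definition idempotent_ideal :: "'a::monoid_mult set \<Rightarrow> bool" where
  "idempotent_ideal I \<longleftrightarrow> two_sided_ideal I \<and> I = set_square I"

definition principal_ideal :: "'a::monoid_mult \<Rightarrow> 'a set" where
  "principal_ideal e = {a * e * b | a b. True}"

definition ii_meet :: "'a::monoid_mult set \<Rightarrow> 'a set \<Rightarrow> 'a set" where
  "ii_meet I J = (\<Union>e\<in>{e. e \<in> I \<inter> J \<and> e * e = e}. principal_ideal e)"

end

theory Submission
  imports Defs
begin

lemma ideal_mul_left: "two_sided_ideal I \<Longrightarrow> x \<in> I \<Longrightarrow> m * x \<in> I"
  unfolding two_sided_ideal_def by blast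
lemma ideal_mul_right: "two_sided_ideal I \<Longrightarrow> x \<in> I \<Longrightarrow> x * m \<in> I"
  unfolding two_sided_ideal_def by blast

lemma sq_sub: "two_sided_ideal I \<Longrightarrow> set_square I \<subseteq> I"
  unfolding set_square_def using ideal_mul_right by blast

lemma sq_mono: "I \<subseteq> J \<Longrightarrow> set_square I \<subseteq> set_square J"
  unfolding set_square_def by blast

lemma union_idem:
  assumes "\<forall>I\<in>F. idempotent_ideal I"
  shows "idempotent_ideal (\<Union>F)"
proof -
  have id: "two_sided_ideal (\<Union>F)"
    using assms unfolding idempotent_ideal_def two_sided_ideal_def by blast
  have "\<Union>F \<subseteq> set_square (\<Union>F)"
  proof
    fix x assume "x \<in> \<Union>F"
    then obtain I where I: "I \<in> F" "x \<in> I" by blast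
    then have "x \<in> set_square I" using assms unfolding idempotent_ideal_def by blast
    then show "x \<in> set_square (\<Union>F)" using sq_mono[of I "\<Union>F"] I by blast
  qed
  then show ?thesis using id sq_sub unfolding idempotent_ideal_def by blast
qed

lemma principal_idem:
  fixes e :: "'a::monoid_mult"
  assumes "e * e = e"
  shows "idempotent_ideal (principal_ideal e)" "e \<in> principal_ideal e"
proof -
  have id: "two_sided_ideal (principal_ideal e)"
    unfolding two_sided_ideal_def principal_ideal_def
    by (auto simp: mult.assoc) (metis mult.assoc)+
  have "principal_ideal e \<subseteq> set_square (principal_ideal e)"
  proof
    fix x assume "x \<in> principal_ideal e"
    then obtain a b where x: "x = a * e * b" unfolding principal_ideal_def by blast
    have "(a * e * 1) * (1 * e * b) = a * (e * e) * b" by (simp add: mult.assoc)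
    then have "x = (a * e * 1) * (1 * e * b)" using x assms by simp
    then show "x \<in> set_square (principal_ideal e)"
      unfolding set_square_def principal_ideal_def by blast
  qed
  then show "idempotent_ideal (principal_ideal e)"
    using id sq_sub unfolding idempotent_ideal_def by blast
  show "e \<in> principal_ideal e" unfolding principal_ideal_def
    by (rule CollectI, rule exI[of _ 1], rule exI[of _ 1]) simp
qed

lemma principal_sub:
  assumes "two_sided_ideal I" "e \<in> I"
  shows "principal_ideal e \<subseteq> I"
  using assms unfolding principal_ideal_def two_sided_ideal_def by blast

lemma idem_power:
  fixes w :: "'a::{monoid_mult,finite}"
  shows "\<exists>m\<ge>1. w ^ m * w ^ m = w ^ m"
proof -
  have "\<not> inj (\<lambda>n::nat. w ^ n)"
  proof
    assume inj: "inj (\<lambda>n::nat. w ^ n)"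
    have "finite (range (\<lambda>n::nat. w ^ n))" by simp
    then have "finite (UNIV :: nat set)" using finite_imageD[OF _ inj] by blast
    then show False by simp
  qed
  then obtain a0 b0 :: nat where ab: "a0 \<noteq> b0" "w ^ a0 = w ^ b0" unfolding inj_def by blast
  have "\<exists>a p::nat. p \<ge> 1 \<and> w ^ a = w ^ (a + p)"
  proof (cases "a0 < b0")
    case True
    have e: "b0 = a0 + (b0 - a0)" using True by simp
    have "w ^ a0 = w ^ (a0 + (b0 - a0))" using ab(2) e by metis
    moreover have "b0 - a0 \<ge> 1" using True by simp
    ultimately show ?thesis by blast
  next
    case False
    then have lt: "b0 < a0" using ab(1) by simp
    have e: "a0 = b0 + (a0 - b0)" using lt by simp
    have "w ^ b0 = w ^ (b0 + (a0 - b0))" using ab(2) e by metis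
    moreover have "a0 - b0 \<ge> 1" using lt by simp
    ultimately show ?thesis by blast
  qed
  then obtain a p :: nat where ap: "p \<ge> 1" "w ^ a = w ^ (a + p)" by blast
  have shift: "w ^ (k + p) = w ^ k" if "k \<ge> a" for k
  proof -
    have "w ^ (k + p) = w ^ (k - a) * w ^ (a + p)"
      using that by (simp only: power_add[symmetric]) simp
    also have "\<dots> = w ^ (k - a) * w ^ a" using ap(2) by metis
    also have "\<dots> = w ^ k" using that by (simp only: power_add[symmetric]) simp
    finally show ?thesis .
  qed
  have step: "w ^ (k + t * p) = w ^ k" if "k \<ge> a" for k t
    using that
  proof (induction t arbitrary: k)
    case 0 then show ?case by simp
  next
    case (Suc t)
    have "w ^ (k + Suc t * p) = w ^ ((k + p) + t * p)" by (simp add: add.assoc)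
    also have "\<dots> = w ^ (k + p)" using Suc.IH[of "k + p"] Suc.prems by simp
    also have "\<dots> = w ^ k" using shift Suc.prems by simp
    finally show ?case .
  qed
  define m where "m = (a + 1) * p"
  have m1: "m \<ge> 1" using ap(1) unfolding m_def by simp
  have "a \<le> a * p" using ap(1) by simp
  moreover have "m = p + a * p" unfolding m_def by simp
  ultimately have ma: "m \<ge> a" by linarith
  have "w ^ m * w ^ m = w ^ (m + (a + 1) * p)" by (simp add: power_add m_def)
  also have "\<dots> = w ^ m" by (rule step[OF ma])
  finally show ?thesis using m1 by blast
qed

lemma in_principal:
  fixes x :: "'a::{monoid_mult,finite}"
  assumes I: "idempotent_ideal I" and x: "x \<in> I"
  shows "\<exists>e\<in>I. e * e = e \<and> x \<in> principal_ideal e"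
proof -
  have tI: "two_sided_ideal I" and sq: "I = set_square I"
    using I unfolding idempotent_ideal_def by auto
  have "\<forall>z\<in>I. \<exists>uv. fst uv \<in> I \<and> snd uv \<in> I \<and> z = fst uv * snd uv"
    using sq unfolding set_square_def by force
  from bchoice[OF this] obtain h where
    h: "\<forall>z\<in>I. fst (h z) \<in> I \<and> snd (h z) \<in> I \<and> z = fst (h z) * snd (h z)" by blast
  define f where "f z = fst (h z)" for z
  define g where "g z = snd (h z)" for z
  have fg: "f z \<in> I \<and> g z \<in> I \<and> z = f z * g z" if "z \<in> I" for z
    using h that unfolding f_def g_def by blast
  define p where "p n = (f ^^ n) x" for n
  have pI: "p n \<in> I" for n
  proof (induction n)
    case 0 then show ?case by (simp add: p_def x)
  next
    case (Suc n)
    have "p (Suc n) = f (p n)" by (simp add: p_def)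
    then show ?case using fg[OF Suc] by metis
  qed
  have pS: "p (Suc n) = f (p n)" for n by (simp add: p_def)
  have pp: "p n = p (Suc n) * g (p n)" for n using fg[OF pI[of n]] pS[of n] by metis
  define q where "q n = rec_nat 1 (\<lambda>k r. g (p k) * r) n" for n
  have qS: "q (Suc n) = g (p n) * q n" "q 0 = 1" for n by (simp_all add: q_def)
  have xq: "x = p n * q n" for n
  proof (induction n)
    case 0 then show ?case by (simp add: qS p_def)
  next
    case (Suc n)
    have "p (Suc n) * q (Suc n) = (p (Suc n) * g (p n)) * q n" using qS by (simp add: mult.assoc)
    then show ?case using pp[of n] Suc by metis
  qed
  have chain: "\<exists>w\<in>I. p i = p (i + Suc d) * w" for i d
  proof (induction d)
    case 0
    have "i + Suc 0 = Suc i" by simp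
    then show ?case using pp[of i] fg[OF pI[of i]] by metis
  next
    case (Suc d)
    then obtain w where w: "w \<in> I" "p i = p (i + Suc d) * w" by blast
    have "p i = p (i + Suc (Suc d)) * (g (p (i + Suc d)) * w)"
      using w(2) pp[of "i + Suc d"] by (metis mult.assoc add_Suc_right)
    moreover have "g (p (i + Suc d)) * w \<in> I" using w(1) tI ideal_mul_left by blast
    ultimately show ?case by blast
  qed
  have "\<not> inj p"
  proof
    assume inj: "inj p"
    have "finite (range p)" by simp
    then have "finite (UNIV :: nat set)" using finite_imageD[OF _ inj] by blast
    then show False by simp
  qed
  then obtain i j where ij: "i < j" "p i = p j" unfolding inj_def
    by (metis linorder_neqE_nat)
  then obtain d where "j = Suc (i + d)" using less_imp_Suc_add by blast
  then have "j = i + Suc d" by simp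
  then have "p j = p (i + Suc d)" by simp
  then obtain w where w: "w \<in> I" "p i = p i * w" using chain[of i d] ij(2) by metis
  have pw: "p i = p i * w ^ n" for n
    by (induction n) (simp, metis w(2) mult.assoc power_Suc2)
  obtain m where m: "m \<ge> 1" "w ^ m * w ^ m = w ^ m" using idem_power by blast
  have eI: "w ^ m \<in> I"
  proof -
    obtain k where "m = Suc k" using m(1) by (cases m) auto
    then have "w ^ m = w * w ^ k" by simp
    then show ?thesis using w(1) tI ideal_mul_right by metis
  qed
  have "x = p i * q i" by (rule xq)
  also have "\<dots> = p i * w ^ m * q i" by (subst pw[of m], rule refl)
  finally have "x = p i * w ^ m * q i" .
  then have "x \<in> principal_ideal (w ^ m)" unfolding principal_ideal_def by blast
  then show ?thesis using eI m by blast
qed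

theorem corollary4p9:
  fixes dummy :: "'a::{monoid_mult, finite}"
  shows "(\<forall>I J :: 'a set. idempotent_ideal I \<and> idempotent_ideal J \<longrightarrow>
            idempotent_ideal (I \<union> J) \<and> I \<subseteq> I \<union> J \<and> J \<subseteq> I \<union> J \<and>
            (\<forall>K. idempotent_ideal K \<and> I \<subseteq> K \<and> J \<subseteq> K \<longrightarrow> I \<union> J \<subseteq> K))
       \<and> (\<forall>I J :: 'a set. idempotent_ideal I \<and> idempotent_ideal J \<longrightarrow>
            idempotent_ideal (ii_meet I J) \<and> ii_meet I J \<subseteq> I \<and> ii_meet I J \<subseteq> J \<and>
            (\<forall>K. idempotent_ideal K \<and> K \<subseteq> I \<and> K \<subseteq> J \<longrightarrow> K \<subseteq> ii_meet I J))
       \<and> (\<forall>I J K :: 'a set. idempotent_ideal I \<and> idempotent_ideal J \<and> idempotent_ideal K \<longrightarrow>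
            ii_meet I (J \<union> K) = ii_meet I J \<union> ii_meet I K)"
proof -
  have A: "idempotent_ideal (I \<union> J) \<and> I \<subseteq> I \<union> J \<and> J \<subseteq> I \<union> J \<and>
            (\<forall>K. idempotent_ideal K \<and> I \<subseteq> K \<and> J \<subseteq> K \<longrightarrow> I \<union> J \<subseteq> K)"
    if h: "idempotent_ideal I \<and> idempotent_ideal J" for I J :: "'a set"
    using union_idem[of "{I, J}"] h by auto
  have B: "idempotent_ideal (ii_meet I J) \<and> ii_meet I J \<subseteq> I \<and> ii_meet I J \<subseteq> J \<and>
            (\<forall>K. idempotent_ideal K \<and> K \<subseteq> I \<and> K \<subseteq> J \<longrightarrow> K \<subseteq> ii_meet I J)"
    if h: "idempotent_ideal I \<and> idempotent_ideal J" for I J :: "'a set"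
  proof (intro conjI)
    have tI: "two_sided_ideal I" "two_sided_ideal J" using h unfolding idempotent_ideal_def by auto
    have "ii_meet I J = \<Union>(principal_ideal ` {e. e \<in> I \<inter> J \<and> e * e = e})"
      unfolding ii_meet_def by simp
    then show "idempotent_ideal (ii_meet I J)"
      using union_idem[of "principal_ideal ` {e. e \<in> I \<inter> J \<and> e * e = e}"] principal_idem(1)
      by auto
    show "ii_meet I J \<subseteq> I" "ii_meet I J \<subseteq> J"
      unfolding ii_meet_def using principal_sub tI by blast+
    show "\<forall>K. idempotent_ideal K \<and> K \<subseteq> I \<and> K \<subseteq> J \<longrightarrow> K \<subseteq> ii_meet I J"
    proof (intro allI impI subsetI)
      fix K x assume K: "idempotent_ideal K \<and> K \<subseteq> I \<and> K \<subseteq> J" and x: "x \<in> K"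
      then obtain e where "e \<in> K" "e * e = e" "x \<in> principal_ideal e"
        using in_principal by blast
      then show "x \<in> ii_meet I J" using K unfolding ii_meet_def by blast
    qed
  qed
  have C: "ii_meet I (J \<union> K) = ii_meet I J \<union> ii_meet I K" for I J K :: "'a set"
    unfolding ii_meet_def by auto
  show ?thesis
  proof (intro conjI)
    show "\<forall>I J :: 'a set. idempotent_ideal I \<and> idempotent_ideal J \<longrightarrow>
            idempotent_ideal (I \<union> J) \<and> I \<subseteq> I \<union> J \<and> J \<subseteq> I \<union> J \<and>
            (\<forall>K. idempotent_ideal K \<and> I \<subseteq> K \<and> J \<subseteq> K \<longrightarrow> I \<union> J \<subseteq> K)"
      using A by blast
    show "\<forall>I J :: 'a set. idempotent_ideal I \<and> idempotent_ideal J \<longrightarrow>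
            idempotent_ideal (ii_meet I J) \<and> ii_meet I J \<subseteq> I \<and> ii_meet I J \<subseteq> J \<and>
            (\<forall>K. idempotent_ideal K \<and> K \<subseteq> I \<and> K \<subseteq> J \<longrightarrow> K \<subseteq> ii_meet I J)"
      using B by blast
    show "\<forall>I J K :: 'a set. idempotent_ideal I \<and> idempotent_ideal J \<and> idempotent_ideal K \<longrightarrow>
            ii_meet I (J \<union> K) = ii_meet I J \<union> ii_meet I K"
      using C by blast
  qed
qed

end
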